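(* $\mathbf S(\mathbf{pAND}\cup\mathbf{11tAND}\cup\mathbf{11pOR}\cup\mathbf{tOR})=\mathbf S(\mathbf{pAND}\cup\mathbf{11pOR}\cup\mathbf{tOR})$.
   Context: Petri nets: $(P,T,F)$ with finite disjoint places $P$, transitions $T$, flow edges $F\subseteq(P\times T)\cup(T\times P)$; $\bullet x=\{y\mid(y,x)\in F\}$, $x\bullet=\{y\mid(x,y)\in F\}$. Workflow nets. A pWF net is $(P,T,F,I,O)$ with $(P,T,F)$ a Petri net, $I,O\subseteq P$ non-empty, every node reachable by a directed path from some node of $I$, and some node of $O$ reachable from every node. A tWF net is the same with $I,O$ non-empty subsets of $T$. Input nodes may have incoming edges and output nodes outgoing edges. A WF net is a pWF or tWF net; it is one-input (one-output) if $|I|=1$ ($|O|=1$). Substitution. Let $N=(P,T,F,I,O)$ and $M=(P',T',F',I',O')$ be WF nets with disjoint node sets. If $p\in P$ and $M$ is a pWF net, $N\otimes_p M$ is obtained from $N$ by deleting $p$ and all edges incident to $p$, adding all nodes and edges of $M$, adding an edge $(t,p')$ for each $t\in\bullet_N p$ and each $p'\in I'$, and an edge $(p',t)$ for each $p'\in O'$ and each $t\in p\bullet_N$; its input set is $(I\setminus\{p\})\cup I'$ if $p\in I$ and $I$ otherwise, and its output set is $(O\setminus\{p\})\cup O'$ if $p\in O$ and $O$ otherwise. If $t\in T$ and $M$ is a tWF net, $N\otimes_t M$ is defined analogously: delete $t$ and its edges, add $M$, add $(q,t')$ for each $q\in\bullet_N t$, $t'\in I'$, and $(t',q)$ for each $t'\in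 O'$, $q\in t\bullet_N$, with input/output sets updated in the same way. The substitution closure $\mathbf S(C)$ of a class $C$ of WF nets is the smallest superclass of $C$ such that whenever $N,M\in\mathbf S(C)$ are disjoint, $N\otimes_p M\in\mathbf S(C)$ for every place $p$ of $N$ if $M$ is a pWF net, and $N\otimes_t M\in\mathbf S(C)$ for every transition $t$ of $N$ if $M$ is a tWF net. AND and OR nets. An AND net is an acyclic WF net $(P,T,F,I,O)$ such that for every place $p$: (1) either $p\in I$ and $|\bullet p|=0$, or $p\notin I$ and $|\bullet p|=1$; and (2) either $p\in O$ and $|p\bullet|=0$, or $p\notin O$ and $|p\bullet|=1$. An OR net is a (possibly cyclic) WF net such that for every transition $t$: (1) either $t\in I$ and $|\bullet t|=0$, or $t\notin I$ and $|\bullet t|=1$; and (2) either $t\in O$ and $|t\bullet|=0$, or $t\notin O$ and $|t\bullet|=1$. A pAND (tAND, pOR, tOR) net is an AND (AND, OR, OR) net that is a pWF (tWF, pWF, tWF) net. $\mathbf{pAND}$ is the class of pAND nets, $\mathbf{11tAND}$ the class of one-input one-output tAND nets, $\mathbf{11pOR}$ the class of one-input one-output pOR nets, and $\mathbf{tOR}$ the class of tOR nets. *)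

theory Defs
  imports Main
begin

record 'a wfn =
  places :: "'a set"
  trans  :: "'a set"
  flow   :: "('a \<times> 'a) set"
  inp    :: "'a set"
  outp   :: "'a set"

definition nodes :: "'a wfn \<Rightarrow> 'a set" where
  "nodes N = places N \<union> trans N"

definition preset :: "'a wfn \<Rightarrow> 'a \<Rightarrow> 'a set" where
  "preset N x = {y. (y, x) \<in> flow N}"

definition postset :: "'a wfn \<Rightarrow> 'a \<Rightarrow> 'a set" where
  "postset N x = {y. (x, y) \<in> flow N}"

definition petri_net :: "'a wfn \<Rightarrow> bool" where
  "petri_net N \<longleftrightarrow> finite (places N) \<and> finite (trans N) \<and>
     places N \<inter> trans N = {} \<and>
     flow N \<subseteq> (places N \<times> trans N) \<union> (trans N \<times> places N)"

definition wf_conn :: "'a wfn \<Rightarrow> bool" where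
  "wf_conn N \<longleftrightarrow>
     (\<forall>x\<in>nodes N. \<exists>i\<in>inp N. (i, x) \<in> (flow N)\<^sup>*) \<and>
     (\<forall>x\<in>nodes N. \<exists>q\<in>outp N. (x, q) \<in> (flow N)\<^sup>*)"

definition pWF :: "'a wfn \<Rightarrow> bool" where
  "pWF N \<longleftrightarrow> petri_net N \<and> inp N \<noteq> {} \<and> outp N \<noteq> {} \<and>
     inp N \<subseteq> places N \<and> outp N \<subseteq> places N \<and> wf_conn N"

definition tWF :: "'a wfn \<Rightarrow> bool" where
  "tWF N \<longleftrightarrow> petri_net N \<and> inp N \<noteq> {} \<and> outp N \<noteq> {} \<and>
     inp N \<subseteq> trans N \<and> outp N \<subseteq> trans N \<and> wf_conn N"

definition WF :: "'a wfn \<Rightarrow> bool" where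
  "WF N \<longleftrightarrow> pWF N \<or> tWF N"

definition AND_net :: "'a wfn \<Rightarrow> bool" where
  "AND_net N \<longleftrightarrow> WF N \<and> acyclic (flow N) \<and>
     (\<forall>p\<in>places N.
        ((p \<in> inp N \<and> card (preset N p) = 0) \<or> (p \<notin> inp N \<and> card (preset N p) = 1)) \<and>
        ((p \<in> outp N \<and> card (postset N p) = 0) \<or> (p \<notin> outp N \<and> card (postset N p) = 1)))"

definition OR_net :: "'a wfn \<Rightarrow> bool" where
  "OR_net N \<longleftrightarrow> WF N \<and>
     (\<forall>t\<in>trans N.
        ((t \<in> inp N \<and> card (preset N t) = 0) \<or> (t \<notin> inp N \<and> card (preset N t) = 1)) \<and>
        ((t \<in> outp N \<and> card (postset N t) = 0) \<or> (t \<notin> outp N \<and> card (postset N t) = 1)))"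

definition pAND :: "'a wfn set" where
  "pAND = {N. AND_net N \<and> pWF N}"

definition tAND11 :: "'a wfn set" where
  "tAND11 = {N. AND_net N \<and> tWF N \<and> card (inp N) = 1 \<and> card (outp N) = 1}"

definition pOR11 :: "'a wfn set" where
  "pOR11 = {N. OR_net N \<and> pWF N \<and> card (inp N) = 1 \<and> card (outp N) = 1}"

definition tOR :: "'a wfn set" where
  "tOR = {N. OR_net N \<and> tWF N}"

definition subst :: "'a wfn \<Rightarrow> 'a \<Rightarrow> 'a wfn \<Rightarrow> 'a wfn" where
  "subst N x M = \<lparr>
     places = (places N - {x}) \<union> places M,
     trans  = (trans N - {x}) \<union> trans M,
     flow   = {e \<in> flow N. fst e \<noteq> x \<and> snd e \<noteq> x} \<union> flow M
              \<union> {(u, v). u \<in> preset N x \<and> v \<in> inp M}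
              \<union> {(u, v). u \<in> outp M \<and> v \<in> postset N x},
     inp    = (if x \<in> inp N then (inp N - {x}) \<union> inp M else inp N),
     outp   = (if x \<in> outp N then (outp N - {x}) \<union> outp M else outp N) \<rparr>"

inductive_set sclosure :: "'a wfn set \<Rightarrow> 'a wfn set" for C :: "'a wfn set" where
  base: "N \<in> C \<Longrightarrow> N \<in> sclosure C"
| place: "\<lbrakk>N \<in> sclosure C; M \<in> sclosure C; nodes N \<inter> nodes M = {};
           p \<in> places N; pWF M\<rbrakk> \<Longrightarrow> subst N p M \<in> sclosure C"
| transition: "\<lbrakk>N \<in> sclosure C; M \<in> sclosure C; nodes N \<inter> nodes M = {};
           t \<in> trans N; tWF M\<rbrakk> \<Longrightarrow> subst N t M \<in> sclosure C"

end

theory Submission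
  imports Defs
begin

lemma sclosure_sub:
  assumes "C \<subseteq> sclosure D"
  shows "sclosure C \<subseteq> sclosure D"
proof
  fix N assume "N \<in> sclosure C"
  then show "N \<in> sclosure D"
    by induction (use assms in \<open>auto intro: sclosure.place sclosure.transition\<close>)
qed

lemma tAND11_in:
  assumes inf: "infinite (UNIV :: 'a set)"
  and N: "(N :: 'a wfn) \<in> tAND11"
  shows "N \<in> sclosure (pAND \<union> pOR11 \<union> tOR)"
proof -
  have AN: "AND_net N" and tw: "tWF N" and ci: "card (inp N) = 1" and co: "card (outp N) = 1"
    using N by (auto simp: tAND11_def)
  obtain a where ia: "inp N = {a}" using ci card_1_singletonE by blast
  obtain b where ob: "outp N = {b}" using co card_1_singletonE by blast
  have pn: "petri_net N" and conn: "wf_conn N" and aT: "a \<in> trans N" and bT: "b \<in> trans N"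
    using tw ia ob by (auto simp: tWF_def)
  have fin: "finite (places N)" "finite (trans N)" and disj: "places N \<inter> trans N = {}"
    and fl: "flow N \<subseteq> (places N \<times> trans N) \<union> (trans N \<times> places N)"
    using pn by (auto simp: petri_net_def)
  have acy: "acyclic (flow N)" using AN by (auto simp: AND_net_def)
  have fromA: "\<And>x. x \<in> nodes N \<Longrightarrow> (a, x) \<in> (flow N)\<^sup>*"
    using conn ia by (auto simp: wf_conn_def)
  have toB: "\<And>x. x \<in> nodes N \<Longrightarrow> (x, b) \<in> (flow N)\<^sup>*"
    using conn ob by (auto simp: wf_conn_def)
  have flN: "\<And>u v. (u, v) \<in> flow N \<Longrightarrow> u \<in> nodes N \<and> v \<in> nodes N"
    using fl by (auto simp: nodes_def)
  have noinA: "\<And>y. (y, a) \<notin> flow N"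
  proof
    fix y assume e: "(y, a) \<in> flow N"
    then have "(a, y) \<in> (flow N)\<^sup>*" using fromA flN by blast
    with e have "(y, y) \<in> (flow N)\<^sup>+" by (meson rtrancl_into_trancl2)
    with acy show False by (auto simp: acyclic_def)
  qed
  have nooutB: "\<And>y. (b, y) \<notin> flow N"
  proof
    fix y assume e: "(b, y) \<in> flow N"
    then have "(y, b) \<in> (flow N)\<^sup>*" using toB flN by blast
    with e have "(b, b) \<in> (flow N)\<^sup>+" by (meson rtrancl_into_trancl1 rtrancl_into_trancl2)
    with acy show False by (auto simp: acyclic_def)
  qed
  have aP: "a \<notin> places N" "b \<notin> places N" using aT bT disj by auto
  show ?thesis
  proof (cases "a = b")
    case True
    have nodes1: "nodes N = {a}"
    proof
      show "nodes N \<subseteq> {a}"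
      proof
        fix x assume x: "x \<in> nodes N"
        show "x \<in> {a}"
        proof (rule ccontr)
          assume "x \<notin> {a}"
          then have "(a, x) \<in> (flow N)\<^sup>+" "(x, a) \<in> (flow N)\<^sup>+"
            using fromA[OF x] toB[OF x] True by (auto dest: rtranclD)
          then have "(a, a) \<in> (flow N)\<^sup>+" by auto
          with acy show False by (auto simp: acyclic_def)
        qed
      qed
      show "{a} \<subseteq> nodes N" using aT by (auto simp: nodes_def)
    qed
    have pe: "places N = {}" using nodes1 aP by (auto simp: nodes_def)
    have fe: "flow N = {}" using fl pe by auto
    have tr: "trans N = {a}" using nodes1 pe by (auto simp: nodes_def)
    have "N \<in> tOR"
      using tw ia ob True fe tr
      by (auto simp: tOR_def OR_net_def WF_def preset_def postset_def)
    then show ?thesis by (auto intro: sclosure.base)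
  next
    case False
    have "finite (nodes N)" using fin by (auto simp: nodes_def)
    then obtain p where pN: "p \<notin> nodes N" using inf ex_new_if_finite by blast
    have pa: "p \<noteq> a" "p \<noteq> b" using pN aT bT by (auto simp: nodes_def)
    define X :: "'a wfn" where "X = \<lparr>places = {p}, trans = {a, b}, flow = {(a, p), (p, b)},
       inp = {a}, outp = {b}\<rparr>"
    define M :: "'a wfn" where "M = \<lparr>places = places N, trans = trans N - {a, b},
       flow = {e \<in> flow N. fst e \<notin> {a, b} \<and> snd e \<notin> {a, b}},
       inp = postset N a, outp = preset N b\<rparr>"
    have XtOR: "X \<in> tOR"
    proof -
      have "petri_net X" using pa by (auto simp: X_def petri_net_def)
      moreover have "(a, b) \<in> (flow X)\<^sup>*"
        by (rule rtrancl_trans[of _ p]) (auto simp: X_def)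
      moreover have "wf_conn X"
        using pa calculation(2) by (auto simp: X_def wf_conn_def nodes_def)
      moreover have "preset X a = {}" "postset X a = {p}" "preset X b = {p}" "postset X b = {}"
        using pa False by (auto simp: X_def preset_def postset_def)
      ultimately show ?thesis using pa False
        by (auto simp: tOR_def OR_net_def WF_def tWF_def X_def)
    qed
    have Mflow: "\<And>u v. (u, v) \<in> flow M \<longleftrightarrow> (u, v) \<in> flow N \<and> u \<noteq> a \<and> u \<noteq> b \<and> v \<noteq> a \<and> v \<noteq> b"
      by (auto simp: M_def)
    have ab_plus: "(a, b) \<in> (flow N)\<^sup>+"
      using fromA[of b] bT False by (auto simp: nodes_def dest: rtranclD)
    obtain y where ay: "(a, y) \<in> flow N" using ab_plus by (auto dest: tranclD)
    obtain z where zb: "(z, b) \<in> flow N" using ab_plus by (auto dest: tranclD2)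
    have postP: "postset N a \<subseteq> places N" using fl aT disj by (auto simp: postset_def)
    have preP: "preset N b \<subseteq> places N" using fl bT disj by (auto simp: preset_def)
    have reachM: "\<And>x. (a, x) \<in> (flow N)\<^sup>+ \<Longrightarrow> x \<noteq> b \<Longrightarrow>
        \<exists>i\<in>postset N a. (i, x) \<in> (flow M)\<^sup>*"
    proof -
      fix x assume "(a, x) \<in> (flow N)\<^sup>+" "x \<noteq> b"
      then show "\<exists>i\<in>postset N a. (i, x) \<in> (flow M)\<^sup>*"
      proof (induction rule: trancl_induct)
        case (base y) then show ?case by (auto simp: postset_def)
      next
        case (step y x)
        have "y \<noteq> b" using step nooutB by auto
        have "y \<noteq> a" using step acy by (auto simp: acyclic_def)
        have "x \<noteq> a" using step noinA by auto
        from step obtain i where "i \<in> postset N a" "(i, y) \<in> (flow M)\<^sup>*" using \<open>y \<noteq> b\<close> by auto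
        moreover have "(y, x) \<in> flow M" using Mflow step \<open>y \<noteq> b\<close> \<open>y \<noteq> a\<close> \<open>x \<noteq> a\<close> by auto
        ultimately show ?case by (meson rtrancl.rtrancl_into_rtrancl)
      qed
    qed
    have reachM2: "\<And>x. (x, b) \<in> (flow N)\<^sup>+ \<Longrightarrow> x \<noteq> a \<Longrightarrow>
        \<exists>q\<in>preset N b. (x, q) \<in> (flow M)\<^sup>*"
    proof -
      fix x assume "(x, b) \<in> (flow N)\<^sup>+" "x \<noteq> a"
      then show "\<exists>q\<in>preset N b. (x, q) \<in> (flow M)\<^sup>*"
      proof (induction rule: converse_trancl_induct)
        case (base y) then show ?case by (auto simp: preset_def)
      next
        case (step x y)
        have "y \<noteq> a" using step noinA by auto
        have "y \<noteq> b" using step acy by (auto simp: acyclic_def)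
        have "x \<noteq> b" using step nooutB by auto
        from step obtain q where "q \<in> preset N b" "(y, q) \<in> (flow M)\<^sup>*" using \<open>y \<noteq> a\<close> by auto
        moreover have "(x, y) \<in> flow M" using Mflow step \<open>y \<noteq> b\<close> \<open>y \<noteq> a\<close> \<open>x \<noteq> b\<close> by auto
        ultimately show ?case by (meson converse_rtrancl_into_rtrancl)
      qed
    qed
    have nodesM: "nodes M = nodes N - {a, b}" using aP by (auto simp: M_def nodes_def)
    have pWFM: "pWF M"
    proof -
      have "petri_net M" using fin disj fl by (auto simp: M_def petri_net_def)
      moreover have "inp M \<noteq> {}" using ay by (auto simp: M_def postset_def)
      moreover have "outp M \<noteq> {}" using zb by (auto simp: M_def preset_def)
      moreover have "wf_conn M"
        unfolding wf_conn_def
      proof (intro conjI ballI)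
        fix x assume "x \<in> nodes M"
        then have x: "x \<in> nodes N" "x \<noteq> a" "x \<noteq> b" using nodesM by auto
        have "(a, x) \<in> (flow N)\<^sup>+" using fromA[OF x(1)] x(2) by (auto dest: rtranclD)
        then show "\<exists>i\<in>inp M. (i, x) \<in> (flow M)\<^sup>*" using reachM x by (auto simp: M_def)
        have "(x, b) \<in> (flow N)\<^sup>+" using toB[OF x(1)] x(3) by (auto dest: rtranclD)
        then show "\<exists>q\<in>outp M. (x, q) \<in> (flow M)\<^sup>*" using reachM2 x by (auto simp: M_def)
      qed
      ultimately show ?thesis using postP preP by (auto simp: pWF_def M_def)
    qed
    have ANDM: "AND_net M"
      unfolding AND_net_def
    proof (intro conjI ballI)
      show "WF M" using pWFM by (simp add: WF_def)
      show "acyclic (flow M)" using acy by (rule acyclic_subset) (auto simp: M_def)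
    next
      fix q assume "q \<in> places M"
      then have q: "q \<in> places N" by (simp add: M_def)
      have qa: "q \<noteq> a" "q \<noteq> b" using q aP by auto
      have "card (preset N q) = 1" "card (postset N q) = 1"
        using AN q ia ob qa by (auto simp: AND_net_def)
      then obtain u v where u: "preset N q = {u}" and v: "postset N q = {v}"
        by (meson card_1_singletonE)
      have ub: "u \<noteq> b" using u nooutB by (auto simp: preset_def)
      have va: "v \<noteq> a" using v noinA by (auto simp: postset_def)
      have preM: "preset M q = preset N q - {a, b}" using qa by (auto simp: preset_def Mflow)
      have postM: "postset M q = postset N q - {a, b}" using qa by (auto simp: postset_def Mflow)
      have inM: "q \<in> inp M \<longleftrightarrow> u = a" using u by (auto simp: M_def postset_def preset_def)
      have outM: "q \<in> outp M \<longleftrightarrow> v = b" using v by (auto simp: M_def postset_def preset_def)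
      show "q \<in> inp M \<and> card (preset M q) = 0 \<or> q \<notin> inp M \<and> card (preset M q) = 1"
        using preM u ub inM by auto
      show "q \<in> outp M \<and> card (postset M q) = 0 \<or> q \<notin> outp M \<and> card (postset M q) = 1"
        using postM v va outM by auto
    qed
    have MpAND: "M \<in> pAND" using ANDM pWFM by (simp add: pAND_def)
    have dj: "nodes X \<inter> nodes M = {}" using nodesM pN by (auto simp: X_def nodes_def)
    have "subst X p M \<in> sclosure (pAND \<union> pOR11 \<union> tOR)"
      by (rule sclosure.place) (use XtOR MpAND dj pWFM in \<open>auto intro: sclosure.base simp: X_def\<close>)
    moreover have "subst X p M = N"
    proof (rule wfn.equality)
      show "places (subst X p M) = places N" by (simp add: subst_def X_def M_def)
      show "trans (subst X p M) = trans N" using aT bT pa by (auto simp: subst_def X_def M_def)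
      show "inp (subst X p M) = inp N" using pa ia by (simp add: subst_def X_def)
      show "outp (subst X p M) = outp N" using pa ob by (simp add: subst_def X_def)
      show "wfn.more (subst X p M) = wfn.more N" by (simp add: subst_def)
      have pX: "preset X p = {a}" "postset X p = {b}" using pa by (auto simp: X_def preset_def postset_def)
      show "flow (subst X p M) = flow N"
      proof
        show "flow (subst X p M) \<subseteq> flow N"
          using pX by (auto simp: subst_def M_def X_def postset_def preset_def)
        show "flow N \<subseteq> flow (subst X p M)"
        proof
          fix e assume e: "e \<in> flow N"
          obtain u v where uv: "e = (u, v)" by force
          show "e \<in> flow (subst X p M)"
            using e uv pX noinA nooutB by (auto simp: subst_def M_def postset_def preset_def)
        qed
      qed
    qed
    ultimately show ?thesis by simp
  qed
qed

theorem mainTheorem2: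
  assumes "infinite (UNIV :: 'a set)"
  shows "sclosure (pAND \<union> tAND11 \<union> pOR11 \<union> (tOR :: 'a wfn set))
       = sclosure (pAND \<union> pOR11 \<union> tOR)"
proof
  show "sclosure (pAND \<union> tAND11 \<union> pOR11 \<union> (tOR :: 'a wfn set)) \<subseteq> sclosure (pAND \<union> pOR11 \<union> tOR)"
    by (rule sclosure_sub) (use tAND11_in[OF assms] in \<open>auto intro: sclosure.base\<close>)
  show "sclosure (pAND \<union> pOR11 \<union> (tOR :: 'a wfn set)) \<subseteq> sclosure (pAND \<union> tAND11 \<union> pOR11 \<union> tOR)"
    by (rule sclosure_sub) (auto intro: sclosure.base)
qed

end
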